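(* The following first-order theories do not have the amalgamation property: (a) the theory of an antisymmetric binary relation $S$ together with two partial orders $\le$ and $\le'$, both finer than $S$ (i.e. ${\le}\subseteq S$ and ${\le'}\subseteq S$); (b) the theory of an antisymmetric binary relation $S$ together with two transitive binary relations, both finer than $S$; (c) the theory of a partial order $\le$ together with a coarser antisymmetric binary relation $S$ (${\le}\subseteq S$) and a bijective unary operation $f$ which is $S$-preserving ($x\,S\,y$ implies $f(x)\,S\,f(y)$).
   Context: A theory has the amalgamation property (AP) if whenever $\mathbf{A},\mathbf{B},\mathbf{C}$ are models with $\mathbf{C}\subseteq\mathbf{A}$, $\mathbf{C}\subseteq\mathbf{B}$ and $C=A\cap B$, there are a model $\mathbf{D}$ and embeddings of $\mathbf{A}$ and $\mathbf{B}$ into $\mathbf{D}$ which agree on $C$. *)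

theory Defs
  imports Main
begin

record 'a str3 =
  car3 :: "'a set"
  relS :: "'a rel"
  rel1 :: "'a rel"
  rel2 :: "'a rel"

definition wf3 :: "'a str3 \<Rightarrow> bool" where
  "wf3 M \<longleftrightarrow> car3 M \<noteq> {} \<and> relS M \<subseteq> car3 M \<times> car3 M
     \<and> rel1 M \<subseteq> car3 M \<times> car3 M \<and> rel2 M \<subseteq> car3 M \<times> car3 M"

definition porder_on :: "'a set \<Rightarrow> 'a rel \<Rightarrow> bool" where
  "porder_on U R \<longleftrightarrow> R \<subseteq> U \<times> U \<and> (\<forall>x\<in>U. (x, x) \<in> R) \<and> trans R \<and> antisym R"

definition model_a :: "'a str3 \<Rightarrow> bool" where
  "model_a M \<longleftrightarrow> wf3 M \<and> antisym (relS M)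
     \<and> porder_on (car3 M) (rel1 M) \<and> porder_on (car3 M) (rel2 M)
     \<and> rel1 M \<subseteq> relS M \<and> rel2 M \<subseteq> relS M"

definition model_b :: "'a str3 \<Rightarrow> bool" where
  "model_b M \<longleftrightarrow> wf3 M \<and> antisym (relS M)
     \<and> trans (rel1 M) \<and> trans (rel2 M)
     \<and> rel1 M \<subseteq> relS M \<and> rel2 M \<subseteq> relS M"

definition sub3 :: "'a str3 \<Rightarrow> 'a str3 \<Rightarrow> bool" where
  "sub3 C A \<longleftrightarrow> car3 C \<subseteq> car3 A
     \<and> relS C = relS A \<inter> (car3 C \<times> car3 C)
     \<and> rel1 C = rel1 A \<inter> (car3 C \<times> car3 C)
     \<and> rel2 C = rel2 A \<inter> (car3 C \<times> car3 C)"

definition emb3 :: "('a \<Rightarrow> 'd) \<Rightarrow> 'a str3 \<Rightarrow> 'd str3 \<Rightarrow> bool" where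
  "emb3 h A D \<longleftrightarrow> h ` car3 A \<subseteq> car3 D \<and> inj_on h (car3 A)
     \<and> (\<forall>x\<in>car3 A. \<forall>y\<in>car3 A.
          ((x, y) \<in> relS A \<longleftrightarrow> (h x, h y) \<in> relS D)
        \<and> ((x, y) \<in> rel1 A \<longleftrightarrow> (h x, h y) \<in> rel1 D)
        \<and> ((x, y) \<in> rel2 A \<longleftrightarrow> (h x, h y) \<in> rel2 D))"

definition AP3 :: "('a str3 \<Rightarrow> bool) \<Rightarrow> ('d str3 \<Rightarrow> bool) \<Rightarrow> bool" where
  "AP3 M MD \<longleftrightarrow> (\<forall>A B C. M A \<and> M B \<and> M C \<and> sub3 C A \<and> sub3 C B
      \<and> car3 C = car3 A \<inter> car3 B \<longrightarrow>
      (\<exists>D g h. MD D \<and> emb3 g A D \<and> emb3 h B D \<and> (\<forall>x\<in>car3 C. g x = h x)))"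

record 'a strc =
  carc :: "'a set"
  leq :: "'a rel"
  relSc :: "'a rel"
  fun_f :: "'a \<Rightarrow> 'a"

definition model_c :: "'a strc \<Rightarrow> bool" where
  "model_c M \<longleftrightarrow> carc M \<noteq> {} \<and> relSc M \<subseteq> carc M \<times> carc M
     \<and> porder_on (carc M) (leq M) \<and> antisym (relSc M) \<and> leq M \<subseteq> relSc M
     \<and> bij_betw (fun_f M) (carc M) (carc M)
     \<and> (\<forall>x y. (x, y) \<in> relSc M \<longrightarrow> (fun_f M x, fun_f M y) \<in> relSc M)"

definition subc :: "'a strc \<Rightarrow> 'a strc \<Rightarrow> bool" where
  "subc C A \<longleftrightarrow> carc C \<subseteq> carc A
     \<and> leq C = leq A \<inter> (carc C \<times> carc C)
     \<and> relSc C = relSc A \<inter> (carc C \<times> carc C)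
     \<and> (\<forall>x\<in>carc C. fun_f C x = fun_f A x)"

definition embc :: "('a \<Rightarrow> 'd) \<Rightarrow> 'a strc \<Rightarrow> 'd strc \<Rightarrow> bool" where
  "embc h A D \<longleftrightarrow> h ` carc A \<subseteq> carc D \<and> inj_on h (carc A)
     \<and> (\<forall>x\<in>carc A. \<forall>y\<in>carc A.
          ((x, y) \<in> leq A \<longleftrightarrow> (h x, h y) \<in> leq D)
        \<and> ((x, y) \<in> relSc A \<longleftrightarrow> (h x, h y) \<in> relSc D))
     \<and> (\<forall>x\<in>carc A. h (fun_f A x) = fun_f D (h x))"

definition APc :: "('a strc \<Rightarrow> bool) \<Rightarrow> ('d strc \<Rightarrow> bool) \<Rightarrow> bool" where
  "APc M MD \<longleftrightarrow> (\<forall>A B C. M A \<and> M B \<and> M C \<and> subc C A \<and> subc C B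
      \<and> carc C = carc A \<inter> carc B \<longrightarrow>
      (\<exists>D g h. MD D \<and> embc g A D \<and> embc h B D \<and> (\<forall>x\<in>carc C. g x = h x)))"

end

theory Submission
  imports Defs
begin

definition A3 :: "nat str3" where
  "A3 = \<lparr>car3 = {0,1,2}, relS = Id_on {0,1,2} \<union> {(2,0),(1,2)},
         rel1 = Id_on {0,1,2} \<union> {(2,0)}, rel2 = Id_on {0,1,2} \<union> {(1,2)}\<rparr>"
definition B3 :: "nat str3" where
  "B3 = \<lparr>car3 = {0,1,3}, relS = Id_on {0,1,3} \<union> {(0,3),(3,1)},
         rel1 = Id_on {0,1,3} \<union> {(0,3)}, rel2 = Id_on {0,1,3} \<union> {(3,1)}\<rparr>"
definition C3 :: "nat str3" where
  "C3 = \<lparr>car3 = {0,1}, relS = Id_on {0,1}, rel1 = Id_on {0,1}, rel2 = Id_on {0,1}\<rparr>"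

lemma subs3: "sub3 C3 A3" "sub3 C3 B3" "car3 C3 = car3 A3 \<inter> car3 B3"
  by (auto simp: sub3_def A3_def B3_def C3_def Id_on_def)

lemma models_a: "model_a A3" "model_a B3" "model_a C3"
  by (auto simp: model_a_def wf3_def porder_on_def trans_def antisym_def A3_def B3_def C3_def Id_on_def)

lemma models_b: "model_b A3" "model_b B3" "model_b C3"
  by (auto simp: model_b_def wf3_def trans_def antisym_def A3_def B3_def C3_def Id_on_def)

lemma key3:
  assumes S: "antisym (relS D)" and t1: "trans (rel1 D)" and t2: "trans (rel2 D)"
    and i1: "rel1 D \<subseteq> relS D" and i2: "rel2 D \<subseteq> relS D"
    and g: "emb3 g A3 D" and h: "emb3 h B3 D" and gh: "\<forall>x\<in>car3 C3. g x = h x"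
  shows False
proof -
  have c: "g 0 = h 0" "g 1 = h 1" using gh by (auto simp: C3_def)
  have a1: "(g 2, g 0) \<in> rel1 D" using g unfolding emb3_def by (auto simp: A3_def)
  have a2: "(g 1, g 2) \<in> rel2 D" using g unfolding emb3_def by (auto simp: A3_def)
  have b1: "(h 0, h 3) \<in> rel1 D" using h unfolding emb3_def by (auto simp: B3_def)
  have b2: "(h 3, h 1) \<in> rel2 D" using h unfolding emb3_def by (auto simp: B3_def)
  have "(g 2, h 3) \<in> rel1 D" using a1 b1 c t1 by (metis transD)
  hence s1: "(g 2, h 3) \<in> relS D" using i1 by auto
  have "(h 3, g 2) \<in> rel2 D" using a2 b2 c t2 by (metis transD)
  hence "(h 3, g 2) \<in> relS D" using i2 by auto
  hence e: "g 2 = h 3" using s1 S by (metis antisymD)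
  have "(g 0, g 2) \<in> rel1 D" using b1 c e by simp
  hence "g 0 = g 2" using a1 i1 S by (metis antisymD subsetD)
  moreover have "inj_on g {0,1,2}" using g unfolding emb3_def by (simp add: A3_def)
  ultimately show False by (auto dest: inj_onD)
qed

lemma notA: "\<not> AP3 (model_a :: nat str3 \<Rightarrow> bool) (model_a :: 'd str3 \<Rightarrow> bool)"
proof
  assume "AP3 (model_a :: nat str3 \<Rightarrow> bool) (model_a :: 'd str3 \<Rightarrow> bool)"
  then obtain D :: "'d str3" and g h where "model_a D" "emb3 g A3 D" "emb3 h B3 D"
     "\<forall>x\<in>car3 C3. g x = h x"
    unfolding AP3_def using models_a subs3 by blast
  thus False using key3[of D g h] unfolding model_a_def porder_on_def by blast
qed

lemma notB: "\<not> AP3 (model_b :: nat str3 \<Rightarrow> bool) (model_b :: 'd str3 \<Rightarrow> bool)"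
proof
  assume "AP3 (model_b :: nat str3 \<Rightarrow> bool) (model_b :: 'd str3 \<Rightarrow> bool)"
  then obtain D :: "'d str3" and g h where "model_b D" "emb3 g A3 D" "emb3 h B3 D"
     "\<forall>x\<in>car3 C3. g x = h x"
    unfolding AP3_def using models_b subs3 by blast
  thus False using key3[of D g h] unfolding model_b_def by blast
qed

definition Ac :: "nat strc" where
  "Ac = \<lparr>carc = {0,1,2,3}, leq = Id_on {0,1,2,3} \<union> {(2,0),(1,3)},
         relSc = Id_on {0,1,2,3} \<union> {(2,0),(3,0),(1,3),(1,2)},
         fun_f = (\<lambda>x. if x = 2 then 3 else if x = 3 then 2 else x)\<rparr>"
definition Bc :: "nat strc" where
  "Bc = \<lparr>carc = {0,1,4,5}, leq = Id_on {0,1,4,5} \<union> {(0,4),(5,1)},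
         relSc = Id_on {0,1,4,5} \<union> {(0,4),(0,5),(5,1),(4,1)},
         fun_f = (\<lambda>x. if x = 4 then 5 else if x = 5 then 4 else x)\<rparr>"
definition Cc :: "nat strc" where
  "Cc = \<lparr>carc = {0,1}, leq = Id_on {0,1}, relSc = Id_on {0,1}, fun_f = (\<lambda>x. x)\<rparr>"

lemma subsc: "subc Cc Ac" "subc Cc Bc" "carc Cc = carc Ac \<inter> carc Bc"
  by (auto simp: subc_def Ac_def Bc_def Cc_def Id_on_def)

lemma bijA: "bij_betw (\<lambda>x::nat. if x = 2 then 3 else if x = 3 then 2 else x) {0,1,2,3} {0,1,2,3}"
  by (auto simp: bij_betw_def inj_on_def image_def)
lemma bijB: "bij_betw (\<lambda>x::nat. if x = 4 then 5 else if x = 5 then 4 else x) {0,1,4,5} {0,1,4,5}"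
  by (auto simp: bij_betw_def inj_on_def image_def)

lemma Ac1: "porder_on (carc Ac) (leq Ac)" unfolding porder_on_def trans_def antisym_def Ac_def Id_on_def by auto
lemma Ac2: "antisym (relSc Ac)" unfolding antisym_def Ac_def Id_on_def by auto
lemma Ac3: "\<forall>x y. (x, y) \<in> relSc Ac \<longrightarrow> (fun_f Ac x, fun_f Ac y) \<in> relSc Ac" unfolding Ac_def Id_on_def by auto
lemma Ac4: "relSc Ac \<subseteq> carc Ac \<times> carc Ac" "leq Ac \<subseteq> relSc Ac" "carc Ac \<noteq> {}" unfolding Ac_def Id_on_def by auto

lemma Bc1: "porder_on (carc Bc) (leq Bc)" unfolding porder_on_def trans_def antisym_def Bc_def Id_on_def by auto
lemma Bc2: "antisym (relSc Bc)" unfolding antisym_def Bc_def Id_on_def by auto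
lemma Bc3: "\<forall>x y. (x, y) \<in> relSc Bc \<longrightarrow> (fun_f Bc x, fun_f Bc y) \<in> relSc Bc" unfolding Bc_def Id_on_def by auto
lemma Bc4: "relSc Bc \<subseteq> carc Bc \<times> carc Bc" "leq Bc \<subseteq> relSc Bc" "carc Bc \<noteq> {}" unfolding Bc_def Id_on_def by auto

lemma Cc1: "porder_on (carc Cc) (leq Cc)" unfolding porder_on_def trans_def antisym_def Cc_def Id_on_def by auto
lemma Cc2: "antisym (relSc Cc)" unfolding antisym_def Cc_def Id_on_def by auto
lemma Cc3: "\<forall>x y. (x, y) \<in> relSc Cc \<longrightarrow> (fun_f Cc x, fun_f Cc y) \<in> relSc Cc" unfolding Cc_def Id_on_def by auto
lemma Cc4: "relSc Cc \<subseteq> carc Cc \<times> carc Cc" "leq Cc \<subseteq> relSc Cc" "carc Cc \<noteq> {}" unfolding Cc_def Id_on_def by auto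

lemma Ac5: "bij_betw (fun_f Ac) (carc Ac) (carc Ac)" using bijA by (simp add: Ac_def)
lemma Bc5: "bij_betw (fun_f Bc) (carc Bc) (carc Bc)" using bijB by (simp add: Bc_def)
lemma Cc5: "bij_betw (fun_f Cc) (carc Cc) (carc Cc)" by (simp add: Cc_def bij_betw_def)
lemma models_c: "model_c Ac" "model_c Bc" "model_c Cc"
  unfolding model_c_def using Ac1 Ac2 Ac3 Ac4 Ac5 Bc1 Bc2 Bc3 Bc4 Bc5 Cc1 Cc2 Cc3 Cc4 Cc5 by simp_all

lemma notC: "\<not> APc (model_c :: nat strc \<Rightarrow> bool) (model_c :: 'd strc \<Rightarrow> bool)"
proof
  assume "APc (model_c :: nat strc \<Rightarrow> bool) (model_c :: 'd strc \<Rightarrow> bool)"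
  then obtain D :: "'d strc" and g h where D: "model_c D" and g: "embc g Ac D"
     and h: "embc h Bc D" and gh: "\<forall>x\<in>carc Cc. g x = h x"
    unfolding APc_def using models_c subsc by blast
  have L: "trans (leq D)" "antisym (leq D)" "antisym (relSc D)" "leq D \<subseteq> relSc D"
    and P: "\<And>x y. (x, y) \<in> relSc D \<Longrightarrow> (fun_f D x, fun_f D y) \<in> relSc D"
    using D unfolding model_c_def porder_on_def by blast+
  have c: "g 0 = h 0" "g 1 = h 1" using gh by (auto simp: Cc_def)
  have Eg: "\<And>x y. x \<in> carc Ac \<Longrightarrow> y \<in> carc Ac \<Longrightarrow> ((x,y) \<in> leq Ac \<longleftrightarrow> (g x, g y) \<in> leq D)"
    and Fg: "\<And>x. x \<in> carc Ac \<Longrightarrow> g (fun_f Ac x) = fun_f D (g x)"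
    using g unfolding embc_def by blast+
  have Eh: "\<And>x y. x \<in> carc Bc \<Longrightarrow> y \<in> carc Bc \<Longrightarrow> ((x,y) \<in> leq Bc \<longleftrightarrow> (h x, h y) \<in> leq D)"
    and Fh: "\<And>x. x \<in> carc Bc \<Longrightarrow> h (fun_f Bc x) = fun_f D (h x)"
    using h unfolding embc_def by blast+
  have a1: "(g 2, g 0) \<in> leq D" using Eg[of 2 0] by (simp add: Ac_def)
  have a2: "(g 1, g 3) \<in> leq D" using Eg[of 1 3] by (simp add: Ac_def)
  have b1: "(h 0, h 4) \<in> leq D" using Eh[of 0 4] by (simp add: Bc_def)
  have b2: "(h 5, h 1) \<in> leq D" using Eh[of 5 1] by (simp add: Bc_def)
  have f1: "fun_f D (g 3) = g 2" using Fg[of 3] by (simp add: Ac_def)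
  have f2: "fun_f D (h 5) = h 4" using Fh[of 5] by (simp add: Bc_def)
  have "(g 2, h 4) \<in> leq D" using a1 b1 c L(1) by (metis transD)
  hence s1: "(g 2, h 4) \<in> relSc D" using L(4) by auto
  have "(h 5, g 3) \<in> leq D" using a2 b2 c L(1) by (metis transD)
  hence s2: "(h 5, g 3) \<in> relSc D" using L(4) by auto
  have "(h 4, g 2) \<in> relSc D" using P[OF s2] f1 f2 by simp
  hence e: "g 2 = h 4" using s1 L(3) by (metis antisymD)
  have "(g 0, g 2) \<in> leq D" using b1 c e by simp
  hence "g 0 = g 2" using a1 L(2) by (metis antisymD)
  moreover have "inj_on g (carc Ac)" using g unfolding embc_def by blast
  moreover have "(0::nat) \<in> carc Ac" "(2::nat) \<in> carc Ac" by (simp_all add: Ac_def)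
  ultimately show False by (metis inj_onD zero_neq_numeral)
qed

theorem proposition3p5:
  shows "\<not> AP3 (model_a :: nat str3 \<Rightarrow> bool) (model_a :: 'd str3 \<Rightarrow> bool)
       \<and> \<not> AP3 (model_b :: nat str3 \<Rightarrow> bool) (model_b :: 'd str3 \<Rightarrow> bool)
       \<and> \<not> APc (model_c :: nat strc \<Rightarrow> bool) (model_c :: 'd strc \<Rightarrow> bool)"
  using notA notB notC by blast

end
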